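(* The class of ($ISK_4$, wheel)-free graphs is 2-cutset-safe.
   Context: All graphs are finite and simple. A graph is $ISK_4$-free if it contains no induced subgraph isomorphic to a subdivision of $K_4$ (a graph obtained from $K_4$ by replacing edges by internally vertex-disjoint paths). A hole is a cycle with no chords (a chordless cycle). A wheel $(H,v)$ consists of a hole $H$ and a vertex $v$ with at least three neighbours in $H$; a graph is wheel-free if it contains no wheel as an induced subgraph. A connected graph $G$ has a 1-cutset if there is $x\in V(G)$ with $G\setminus\{x\}$ having at least two components. A 2-cutset is a pair of vertices $u,v$ with $G\setminus\{u,v\}$ not connected. For a component $C$ of $G\setminus\{u,v\}$, $\operatorname{cl}(C)$ is obtained from the subgraph induced by $C\cup\{u,v\}$ by adding the edge $uv$, and $\operatorname{cl}^*(C)$ is obtained from $\operatorname{cl}(C)$ by subdividing the edge $uv$ exactly once. A hereditary class $\mathcal{F}$ is 2-cutset-safe if for every $G\in\mathcal{F}$ with no 1-cutset, every 2-cutset $\{u,v\}$ of $G$ and every component $C$ of $G\setminus\{u,v\}$, either $\operatorname{cl}(C)\in\mathcal{F}$ or $\operatorname{cl}^*(C)\in\mathcal{F}$. *)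

theory Defs
  imports Main
begin

definition graph :: "'a set \<Rightarrow> 'a set set \<Rightarrow> bool" where
  "graph V E \<longleftrightarrow> finite V \<and> (\<forall>e\<in>E. \<exists>x y. e = {x, y} \<and> x \<noteq> y \<and> x \<in> V \<and> y \<in> V)"

definition induced :: "'a set set \<Rightarrow> 'a set \<Rightarrow> 'a set set" where
  "induced E S = {e \<in> E. e \<subseteq> S}"

definition path_list :: "'a list \<Rightarrow> 'a \<Rightarrow> 'a \<Rightarrow> bool" where
  "path_list p x y \<longleftrightarrow> length p \<ge> 2 \<and> distinct p \<and> hd p = x \<and> last p = y"

definition path_edges :: "'a list \<Rightarrow> 'a set set" where
  "path_edges p = {{p ! i, p ! (Suc i)} | i. Suc i < length p}"

definition interior :: "'a list \<Rightarrow> 'a set" where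
  "interior p = set p - {hd p, last p}"

definition subdivK4 :: "'a set \<Rightarrow> 'a set set \<Rightarrow> bool" where
  "subdivK4 V E \<longleftrightarrow>
    (\<exists>a b c d pab pac pad pbc pbd pcd.
       distinct [a, b, c, d] \<and>
       path_list pab a b \<and> path_list pac a c \<and> path_list pad a d \<and>
       path_list pbc b c \<and> path_list pbd b d \<and> path_list pcd c d \<and>
       (let ps = [pab, pac, pad, pbc, pbd, pcd] in
          (\<forall>i<6. \<forall>j<6. i \<noteq> j \<longrightarrow> interior (ps ! i) \<inter> interior (ps ! j) = {}) \<and>
          (\<forall>i<6. interior (ps ! i) \<inter> {a, b, c, d} = {}) \<and>
          V = (\<Union>i<6. set (ps ! i)) \<and>
          E = (\<Union>i<6. path_edges (ps ! i))))"

definition ISK4_free :: "'a set \<Rightarrow> 'a set set \<Rightarrow> bool" where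
  "ISK4_free V E \<longleftrightarrow> \<not> (\<exists>S. S \<subseteq> V \<and> subdivK4 S (induced E S))"

definition hole :: "'a set \<Rightarrow> 'a set set \<Rightarrow> 'a set \<Rightarrow> bool" where
  "hole V E H \<longleftrightarrow> H \<subseteq> V \<and>
     (\<exists>cs. distinct cs \<and> length cs \<ge> 3 \<and> set cs = H \<and>
        induced E H = {{cs ! i, cs ! ((Suc i) mod length cs)} | i. i < length cs})"

definition wheel_free :: "'a set \<Rightarrow> 'a set set \<Rightarrow> bool" where
  "wheel_free V E \<longleftrightarrow>
     \<not> (\<exists>H w. hole V E H \<and> w \<in> V \<and> w \<notin> H \<and> card {x \<in> H. {x, w} \<in> E} \<ge> 3)"

definition isk4_wheel_free :: "'a set \<Rightarrow> 'a set set \<Rightarrow> bool" where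
  "isk4_wheel_free V E \<longleftrightarrow> graph V E \<and> ISK4_free V E \<and> wheel_free V E"

definition adj_in :: "'a set \<Rightarrow> 'a set set \<Rightarrow> 'a \<Rightarrow> 'a \<Rightarrow> bool" where
  "adj_in S E x y \<longleftrightarrow> x \<in> S \<and> y \<in> S \<and> {x, y} \<in> E"

definition components :: "'a set \<Rightarrow> 'a set set \<Rightarrow> 'a set set" where
  "components S E = {{y \<in> S. (adj_in S E)\<^sup>*\<^sup>* x y} | x. x \<in> S}"

definition has_1cutset :: "'a set \<Rightarrow> 'a set set \<Rightarrow> bool" where
  "has_1cutset V E \<longleftrightarrow> (\<exists>x\<in>V. card (components (V - {x}) E) \<ge> 2)"

definition is_2cutset :: "'a set \<Rightarrow> 'a set set \<Rightarrow> 'a \<Rightarrow> 'a \<Rightarrow> bool" where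
  "is_2cutset V E u v \<longleftrightarrow> u \<in> V \<and> v \<in> V \<and> u \<noteq> v \<and> card (components (V - {u, v}) E) \<ge> 2"

definition cl_V :: "'a set \<Rightarrow> 'a \<Rightarrow> 'a \<Rightarrow> 'a set" where
  "cl_V C u v = C \<union> {u, v}"

definition cl_E :: "'a set set \<Rightarrow> 'a set \<Rightarrow> 'a \<Rightarrow> 'a \<Rightarrow> 'a set set" where
  "cl_E E C u v = induced E (C \<union> {u, v}) \<union> {{u, v}}"

text \<open>cl*(C): cl(C) with the edge uv subdivided once by a new vertex None
  (old vertices are tagged with Some).\<close>
definition clstar_V :: "'a set \<Rightarrow> 'a \<Rightarrow> 'a \<Rightarrow> 'a option set" where
  "clstar_V C u v = Some ` (C \<union> {u, v}) \<union> {None}"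

definition clstar_E :: "'a set set \<Rightarrow> 'a set \<Rightarrow> 'a \<Rightarrow> 'a \<Rightarrow> 'a option set set" where
  "clstar_E E C u v = (\<lambda>e. Some ` e) ` (cl_E E C u v - {{u, v}})
                      \<union> {{Some u, None}, {None, Some v}}"

end

theory Submission
  imports Defs
begin



lemma pe_Nil[simp]: "path_edges [] = {}"
  by (simp add: path_edges_def)
lemma pe_single[simp]: "path_edges [x] = {}"
  by (simp add: path_edges_def)
lemma pe_Cons2[simp]: "path_edges (x # y # zs) = insert {x, y} (path_edges (y # zs))"
proof -
  have "path_edges (x # y # zs) = {{(x#y#zs) ! i, (x#y#zs) ! (Suc i)} | i. Suc i < length (x#y#zs)}"
    by (simp add: path_edges_def)
  also have "\<dots> = insert {x,y} {{(y#zs) ! i, (y#zs) ! (Suc i)} | i. Suc i < length (y#zs)}"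
  proof (rule set_eqI, rule iffI)
    fix e assume "e \<in> {{(x#y#zs) ! i, (x#y#zs) ! (Suc i)} | i. Suc i < length (x#y#zs)}"
    then obtain i where i: "e = {(x#y#zs) ! i, (x#y#zs) ! (Suc i)}" "Suc i < length (x#y#zs)" by blast
    show "e \<in> insert {x,y} {{(y#zs) ! i, (y#zs) ! (Suc i)} | i. Suc i < length (y#zs)}"
    proof (cases i)
      case 0 then show ?thesis using i by simp
    next
      case (Suc j) then show ?thesis using i by auto
    qed
  next
    fix e assume "e \<in> insert {x,y} {{(y#zs) ! i, (y#zs) ! (Suc i)} | i. Suc i < length (y#zs)}"
    then show "e \<in> {{(x#y#zs) ! i, (x#y#zs) ! (Suc i)} | i. Suc i < length (x#y#zs)}"
    proof
      assume "e = {x,y}" then show ?thesis by (intro CollectI exI[of _ 0]) auto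
    next
      assume "e \<in> {{(y#zs) ! i, (y#zs) ! (Suc i)} | i. Suc i < length (y#zs)}"
      then obtain i where "e = {(y#zs) ! i, (y#zs) ! (Suc i)}" "Suc i < length (y#zs)" by blast
      then show ?thesis by (intro CollectI exI[of _ "Suc i"]) auto
    qed
  qed
  also have "\<dots> = insert {x, y} (path_edges (y # zs))" by (simp add: path_edges_def)
  finally show ?thesis .
qed

lemma pe_append: "path_edges (xs @ ys) = path_edges xs \<union> path_edges ys \<union> (if xs \<noteq> [] \<and> ys \<noteq> [] then {{last xs, hd ys}} else {})"
proof (induction xs rule: induct_list012)
  case 1 then show ?case by simp
next
  case (2 x) then show ?case by (cases ys) auto
next
  case (3 x y zs) then show ?case by auto
qed

lemma pe_sub: "e \<in> path_edges p \<Longrightarrow> e \<subseteq> set p"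
  by (auto simp: path_edges_def)

lemma pe_map: "path_edges (map f p) = (\<lambda>e. f ` e) ` path_edges p"
  by (induction p rule: induct_list012) auto

lemma pe_split: "{x,z} \<in> path_edges p \<Longrightarrow> \<exists>l r. p = l @ [x,z] @ r \<or> p = l @ [z,x] @ r"
proof -
  assume "{x,z} \<in> path_edges p"
  then obtain i where i: "{x,z} = {p!i, p!Suc i}" "Suc i < length p" by (auto simp: path_edges_def)
  have "p = take i p @ [p!i, p!Suc i] @ drop (Suc (Suc i)) p"
    using i(2) by (metis Cons_nth_drop_Suc Suc_lessD append_Cons append_Nil append_take_drop_id)
  then show ?thesis using i(1) by (metis doubleton_eq_iff)
qed


definition cyc :: "'a list \<Rightarrow> 'a set set" where
  "cyc cs = path_edges cs \<union> {{last cs, hd cs}}"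

lemma cyc_idx: assumes "cs \<noteq> []"
  shows "{{cs ! i, cs ! ((Suc i) mod length cs)} | i. i < length cs} = cyc cs"
proof (rule set_eqI, rule iffI)
  fix e assume "e \<in> {{cs ! i, cs ! ((Suc i) mod length cs)} | i. i < length cs}"
  then obtain i where i: "e = {cs ! i, cs ! ((Suc i) mod length cs)}" "i < length cs" by blast
  show "e \<in> cyc cs"
  proof (cases "Suc i < length cs")
    case True then show ?thesis using i by (auto simp: cyc_def path_edges_def)
  next
    case False then have "i = length cs - 1" using i by auto
    then show ?thesis using i assms by (auto simp: cyc_def last_conv_nth hd_conv_nth)
  qed
next
  fix e assume "e \<in> cyc cs"
  then consider "e \<in> path_edges cs" | "e = {last cs, hd cs}" by (auto simp: cyc_def)
  then show "e \<in> {{cs ! i, cs ! ((Suc i) mod length cs)} | i. i < length cs}"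
  proof cases
    case 1 then obtain i where "e = {cs!i, cs!Suc i}" "Suc i < length cs" by (auto simp: path_edges_def)
    then show ?thesis by (intro CollectI exI[of _ i]) auto
  next
    case 2 then show ?thesis using assms
      by (intro CollectI exI[of _ "length cs - 1"]) (auto simp: last_conv_nth hd_conv_nth)
  qed
qed

lemma hole_alt: "hole V E H \<longleftrightarrow> H \<subseteq> V \<and> (\<exists>cs. distinct cs \<and> length cs \<ge> 3 \<and> set cs = H \<and> induced E H = cyc cs)"
proof -
  have eq: "\<And>cs. length cs \<ge> 3 \<Longrightarrow> {{cs ! i, cs ! ((Suc i) mod length cs)} | i. i < length cs} = cyc cs"
    by (rule cyc_idx) auto
  have "(distinct cs \<and> length cs \<ge> 3 \<and> set cs = H \<and> induced E H = {{cs ! i, cs ! ((Suc i) mod length cs)} | i. i < length cs})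
     \<longleftrightarrow> (distinct cs \<and> length cs \<ge> 3 \<and> set cs = H \<and> induced E H = cyc cs)" for cs
    using eq[of cs] by auto
  then show ?thesis unfolding hole_def by presburger
qed

lemma pe_snoc: "xs \<noteq> [] \<Longrightarrow> path_edges (xs @ [a]) = insert {last xs, a} (path_edges xs)"
  using pe_append[of xs "[a]"] by auto

lemma pe_Cons: "xs \<noteq> [] \<Longrightarrow> path_edges (a # xs) = insert {a, hd xs} (path_edges xs)"
  by (cases xs) auto

lemma cyc_rotate1: "cyc (rotate1 cs) = cyc cs"
proof (cases cs)
  case Nil then show ?thesis by simp
next
  case (Cons a l)
  then show ?thesis
  proof (cases "l = []")
    case True then show ?thesis using Cons by simp
  next
    case False
    have "cyc (rotate1 cs) = insert {last l, a} (path_edges l) \<union> {{a, hd l}}"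
      using Cons False by (simp add: cyc_def pe_snoc)
    moreover have "cyc cs = insert {a, hd l} (path_edges l) \<union> {{last l, a}}"
      using Cons False by (simp add: cyc_def pe_Cons)
    ultimately show ?thesis by auto
  qed
qed

lemma cyc_rotate: "cyc (rotate k cs) = cyc cs"
  by (induction k) (auto simp: cyc_rotate1)

lemma cyc_map: "cs \<noteq> [] \<Longrightarrow> cyc (map f cs) = (\<lambda>e. f ` e) ` cyc cs"
  by (auto simp: cyc_def pe_map hd_map last_map)

lemma rotate_to_hd: assumes "x \<in> set cs" shows "\<exists>k rest. rotate k cs = x # rest"
proof -
  obtain l r where "cs = l @ x # r" using assms split_list by metis
  then have "rotate (length l) cs = x # r @ l" by (simp add: rotate_append)
  then show ?thesis by blast
qed

lemma cyc_hd_nbrs: assumes "distinct (x # rest)" "length rest \<ge> 2" "{x,t} \<in> cyc (x # rest)"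
  shows "t = hd rest \<or> t = last rest"
proof -
  obtain b m where r: "rest = b # m" using assms(2) by (cases rest) auto
  have "{x,t} \<notin> path_edges rest" using pe_sub assms(1) by fastforce
  then show ?thesis using assms(3) r by (auto simp: cyc_def doubleton_eq_iff)
qed

lemma cyc_hd_in: assumes "rest \<noteq> []" shows "{x, hd rest} \<in> cyc (x # rest)" "{x, last rest} \<in> cyc (x # rest)"
  using assms by (cases rest; auto simp: cyc_def)+

lemma closing_aux: assumes "distinct (l @ [s, t] @ r)" "length (l @ [s, t] @ r) \<ge> 3"
  "{s,t} = {last (l @ [s, t] @ r), hd (l @ [s, t] @ r)}" shows False
proof (cases l)
  case Nil
  show False
  proof (cases r)
    case Nil then show False using assms(2) \<open>l = []\<close> by simp
  next
    case (Cons r1 r2)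
    then have "last r \<in> set r" by simp
    then show False using assms(1,3) Cons \<open>l = []\<close> by (auto simp: doubleton_eq_iff)
  qed
next
  case (Cons a l')
  then show False using assms(1,3) by (auto simp: doubleton_eq_iff)
qed

lemma pe_closing_not: assumes "distinct cs" "length cs \<ge> 3" shows "{last cs, hd cs} \<notin> path_edges cs"
proof
  assume "{last cs, hd cs} \<in> path_edges cs"
  from pe_split[OF this] obtain l r where "cs = l @ [last cs, hd cs] @ r \<or> cs = l @ [hd cs, last cs] @ r" by blast
  then obtain s t where lr: "cs = l @ [s, t] @ r" "{s,t} = {last cs, hd cs}"
  proof
    assume "cs = l @ [last cs, hd cs] @ r" then show ?thesis using that[of "last cs" "hd cs"] by blast
  next
    assume "cs = l @ [hd cs, last cs] @ r" then show ?thesis using that[of "hd cs" "last cs"] insert_commute by blast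
  qed
  have "distinct (l @ [s, t] @ r)" "length (l @ [s, t] @ r) \<ge> 3" using assms lr(1) by simp_all
  moreover have "{s,t} = {last (l @ [s, t] @ r), hd (l @ [s, t] @ r)}" using lr by simp
  ultimately show False by (rule closing_aux)
qed

lemma rotate_edge: assumes "distinct cs" "length cs \<ge> 3" "{x,z} \<in> cyc cs"
  shows "\<exists>cs2. distinct cs2 \<and> length cs2 = length cs \<and> set cs2 = set cs \<and> cyc cs2 = cyc cs \<and> {last cs2, hd cs2} = {x,z}"
proof -
  have ne: "cs \<noteq> []" using assms(2) by auto
  have "{x,z} \<subseteq> set cs" using assms(3) ne by (auto simp: cyc_def dest!: pe_sub simp: doubleton_eq_iff)
  then have "x \<in> set cs" by auto
  then obtain k rest where kr: "rotate k cs = x # rest" using rotate_to_hd by metis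
  let ?c = "x # rest"
  have d1: "distinct ?c" using kr assms(1) by (metis distinct_rotate)
  have d2: "length ?c = length cs" using kr by (metis length_rotate)
  have d3: "set ?c = set cs" using kr by (metis set_rotate)
  have d4: "cyc ?c = cyc cs" using kr by (metis cyc_rotate)
  have lr: "length rest \<ge> 2" using d2 assms(2) by simp
  then have rne: "rest \<noteq> []" by auto
  have "z = hd rest \<or> z = last rest" using cyc_hd_nbrs[OF d1 lr] assms(3) d4 by metis
  then show ?thesis
  proof
    assume z: "z = hd rest"
    have r1: "rotate1 ?c = rest @ [x]" by simp
    have "last (rest @ [x]) = x" "hd (rest @ [x]) = z" using z rne by auto
    moreover have "distinct (rest @ [x])" "length (rest @ [x]) = length cs" "set (rest @ [x]) = set cs" "cyc (rest @ [x]) = cyc cs"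
      using d1 d2 d3 d4 r1 cyc_rotate1[of ?c] by auto
    ultimately show ?thesis by (intro exI[of _ "rest @ [x]"]) auto
  next
    assume z: "z = last rest"
    then have "last ?c = z" "hd ?c = x" using rne by auto
    then show ?thesis using d1 d2 d3 d4 by (intro exI[of _ "?c"]) auto
  qed
qed




lemma all6: "(\<forall>i<(6::nat). P i) = (P 0 \<and> P 1 \<and> P 2 \<and> P 3 \<and> P 4 \<and> P 5)"
  by (simp add: numeral_eq_Suc All_less_Suc2) 

definition ends :: "'a \<Rightarrow> 'a \<Rightarrow> 'a \<Rightarrow> 'a \<Rightarrow> ('a \<times> 'a) list" where
  "ends a b c d = [(a,b),(a,c),(a,d),(b,c),(b,d),(c,d)]"

definition sK4 :: "'a set \<Rightarrow> 'a set set \<Rightarrow> 'a \<Rightarrow> 'a \<Rightarrow> 'a \<Rightarrow> 'a \<Rightarrow> 'a list list \<Rightarrow> bool" where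
  "sK4 V E a b c d ps \<longleftrightarrow> length ps = 6 \<and> distinct [a,b,c,d] \<and>
     (\<forall>i<6. path_list (ps!i) (fst (ends a b c d ! i)) (snd (ends a b c d ! i))) \<and>
     (\<forall>i<6. \<forall>j<6. i \<noteq> j \<longrightarrow> interior (ps ! i) \<inter> interior (ps ! j) = {}) \<and>
     (\<forall>i<6. interior (ps ! i) \<inter> {a, b, c, d} = {}) \<and>
     V = (\<Union>i<6. set (ps ! i)) \<and>
     E = (\<Union>i<6. path_edges (ps ! i))"

lemma list6: "length ps = 6 \<Longrightarrow> ps = [ps!0, ps!1, ps!2, ps!3, ps!4, ps!5]"
  by (simp add: list_eq_iff_nth_eq all6)

lemma subdivK4_alt: "subdivK4 V E \<longleftrightarrow> (\<exists>a b c d ps. sK4 V E a b c d ps)"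
proof
  assume "subdivK4 V E"
  then obtain a b c d pab pac pad pbc pbd pcd where h:
       "distinct [a, b, c, d]"
       "path_list pab a b" "path_list pac a c" "path_list pad a d"
       "path_list pbc b c" "path_list pbd b d" "path_list pcd c d"
       "(let ps = [pab, pac, pad, pbc, pbd, pcd] in
          (\<forall>i<6. \<forall>j<6. i \<noteq> j \<longrightarrow> interior (ps ! i) \<inter> interior (ps ! j) = {}) \<and>
          (\<forall>i<6. interior (ps ! i) \<inter> {a, b, c, d} = {}) \<and>
          V = (\<Union>i<6. set (ps ! i)) \<and>
          E = (\<Union>i<6. path_edges (ps ! i)))"
    unfolding subdivK4_def by blast
  have "sK4 V E a b c d [pab, pac, pad, pbc, pbd, pcd]"
    using h unfolding sK4_def Let_def by (simp add: all6 ends_def)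
  then show "\<exists>a b c d ps. sK4 V E a b c d ps" by blast
next
  assume "\<exists>a b c d ps. sK4 V E a b c d ps"
  then obtain a b c d ps where s: "sK4 V E a b c d ps" by blast
  then have l: "ps = [ps!0, ps!1, ps!2, ps!3, ps!4, ps!5]" using list6 sK4_def by metis
  have p: "path_list (ps!0) a b" "path_list (ps!1) a c" "path_list (ps!2) a d"
       "path_list (ps!3) b c" "path_list (ps!4) b d" "path_list (ps!5) c d"
    using s unfolding sK4_def by (simp_all add: all6 ends_def)
  show "subdivK4 V E" unfolding subdivK4_def
    apply (rule exI[of _ a], rule exI[of _ b], rule exI[of _ c], rule exI[of _ d])
    apply (rule exI[of _ "ps!0"], rule exI[of _ "ps!1"], rule exI[of _ "ps!2"])
    apply (rule exI[of _ "ps!3"], rule exI[of _ "ps!4"], rule exI[of _ "ps!5"])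
    using s p l[symmetric] unfolding sK4_def Let_def by simp
qed

lemma ends_ne: "i < 6 \<Longrightarrow> k < 6 \<Longrightarrow> i \<noteq> k \<Longrightarrow> distinct [a,b,c,d] \<Longrightarrow>
   {fst (ends a b c d ! i), snd (ends a b c d ! i)} \<noteq> {fst (ends a b c d ! k), snd (ends a b c d ! k)}"
  by (auto simp: ends_def less_Suc_eq numeral_eq_Suc doubleton_eq_iff)

lemma ends_in: "i < 6 \<Longrightarrow> fst (ends a b c d ! i) \<in> {a,b,c,d} \<and> snd (ends a b c d ! i) \<in> {a,b,c,d}"
  by (auto simp: ends_def less_Suc_eq numeral_eq_Suc)

lemma set_interior: "set p = interior p \<union> {hd p, last p} \<inter> set p"
  by (auto simp: interior_def)

lemma path_set: "path_list p s t \<Longrightarrow> set p = interior p \<union> {s, t}"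
proof -
  assume "path_list p s t"
  then have "p \<noteq> []" "s = hd p" "t = last p" by (auto simp: path_list_def)
  then show ?thesis by (auto simp: interior_def)
qed

lemma sK4_len: "sK4 V E a b c d ps \<Longrightarrow> length ps = 6" by (simp add: sK4_def)
lemma sK4_dist: "sK4 V E a b c d ps \<Longrightarrow> distinct [a,b,c,d]" by (simp add: sK4_def)
lemma sK4_path: "sK4 V E a b c d ps \<Longrightarrow> i < 6 \<Longrightarrow> path_list (ps!i) (fst (ends a b c d ! i)) (snd (ends a b c d ! i))"
  unfolding sK4_def by blast
lemma sK4_int: "sK4 V E a b c d ps \<Longrightarrow> i < 6 \<Longrightarrow> j < 6 \<Longrightarrow> i \<noteq> j \<Longrightarrow> interior (ps ! i) \<inter> interior (ps ! j) = {}"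
  unfolding sK4_def by blast
lemma sK4_intabcd: "sK4 V E a b c d ps \<Longrightarrow> i < 6 \<Longrightarrow> interior (ps ! i) \<inter> {a, b, c, d} = {}"
  unfolding sK4_def by blast
lemma sK4_V: "sK4 V E a b c d ps \<Longrightarrow> V = (\<Union>i<6. set (ps ! i))" unfolding sK4_def by blast
lemma sK4_E: "sK4 V E a b c d ps \<Longrightarrow> E = (\<Union>i<6. path_edges (ps ! i))" unfolding sK4_def by blast

lemma sK4_edge_unique:
  assumes s: "sK4 V E a b c d ps" and ik: "i < 6" "k < 6" "i \<noteq> k"
    and xz: "{x,z} \<in> path_edges (ps!i)" "x \<noteq> z"
  shows "{x,z} \<notin> path_edges (ps!k)"
proof
  assume xzk: "{x,z} \<in> path_edges (ps!k)"
  define ei where "ei = {fst (ends a b c d ! i), snd (ends a b c d ! i)}"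
  define ek where "ek = {fst (ends a b c d ! k), snd (ends a b c d ! k)}"
  have "path_list (ps!i) (fst (ends a b c d ! i)) (snd (ends a b c d ! i))" using s ik(1) by (rule sK4_path)
  then have pi: "set (ps!i) = interior (ps!i) \<union> ei" unfolding ei_def by (rule path_set)
  have "path_list (ps!k) (fst (ends a b c d ! k)) (snd (ends a b c d ! k))" using s ik(2) by (rule sK4_path)
  then have pk: "set (ps!k) = interior (ps!k) \<union> ek" unfolding ek_def by (rule path_set)
  have eia: "ei \<subseteq> {a,b,c,d}" "ek \<subseteq> {a,b,c,d}" using ends_in[OF ik(1), of a b c d] ends_in[OF ik(2), of a b c d] unfolding ei_def ek_def by simp_all
  have dis: "interior (ps!i) \<inter> interior (ps!k) = {}" "interior (ps!i) \<inter> {a,b,c,d} = {}"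
     "interior (ps!k) \<inter> {a,b,c,d} = {}" using sK4_int[OF s ik] sK4_intabcd[OF s ik(1)] sK4_intabcd[OF s ik(2)] by simp_all
  have xs: "{x,z} \<subseteq> set (ps!i)" "{x,z} \<subseteq> set (ps!k)" using pe_sub[OF xz(1)] pe_sub[OF xzk] by simp_all
  have both: "y \<in> ei \<and> y \<in> ek" if "y \<in> set (ps!i)" "y \<in> set (ps!k)" for y
  proof -
    have "y \<notin> interior (ps!i)"
    proof
      assume yi: "y \<in> interior (ps!i)"
      then have "y \<notin> interior (ps!k)" "y \<notin> ek" using dis eia by blast+
      then show False using that pk by blast
    qed
    moreover have "y \<notin> interior (ps!k)"
    proof
      assume yi: "y \<in> interior (ps!k)"
      then have "y \<notin> interior (ps!i)" "y \<notin> ei" using dis eia by blast+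
      then show False using that pi by blast
    qed
    ultimately show ?thesis using that pi pk by blast
  qed
  have "x \<in> ei" "z \<in> ei" "x \<in> ek" "z \<in> ek" using both xs by auto
  then have "ei = {x,z}" "ek = {x,z}" using xz(2) unfolding ei_def ek_def by auto
  then show False using ends_ne[OF ik sK4_dist[OF s]] unfolding ei_def ek_def by simp
qed




lemma pe_ins:
  assumes d: "distinct (l @ [s,t] @ r)" and x: "x' \<notin> set (l @ [s,t] @ r)"
  shows "path_edges (l @ [s,x',t] @ r) = path_edges (l @ [s,t] @ r) - {{s,t}} \<union> {{s,x'},{x',t}}"
proof -
  have A: "path_edges (l @ [s,t] @ r) = path_edges l \<union> insert {s,t} (path_edges (t # r)) \<union> (if l \<noteq> [] then {{last l, s}} else {})"
    using pe_append[of l "s # t # r"] by simp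
  have B: "path_edges (l @ [s,x',t] @ r) = path_edges l \<union> insert {s,x'} (insert {x',t} (path_edges (t # r))) \<union> (if l \<noteq> [] then {{last l, s}} else {})"
    using pe_append[of l "s # x' # t # r"] by simp
  have n1: "{s,t} \<notin> path_edges l" using d pe_sub[of "{s,t}" l] by auto
  have n2: "{s,t} \<notin> path_edges (t # r)" using d pe_sub[of "{s,t}" "t # r"] by auto
  have n3: "l \<noteq> [] \<Longrightarrow> {s,t} \<noteq> {last l, s}" using d by (auto simp: doubleton_eq_iff)
  show ?thesis unfolding A B using n1 n2 n3 by auto
qed

lemma induced_sub_E2:
  assumes "\<forall>e\<in>E1. e \<subseteq> V1" "x' \<notin> V1" "S \<subseteq> V1" "x \<in> S" "z \<in> S" "{x,z} \<in> E1"
  shows "induced (E1 - {{x,z}} \<union> {{x,x'},{x',z}}) (insert x' S) = induced E1 S - {{x,z}} \<union> {{x,x'},{x',z}}"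
proof -
  have "x' \<notin> e" if "e \<in> E1" for e using assms(1,2) that by blast
  then show ?thesis using assms(3-5) unfolding induced_def by auto
qed

lemma subdiv_isk4:
  assumes Esub: "\<forall>e\<in>E1. e \<subseteq> V1" and x': "x' \<notin> V1" and xz: "{x,z} \<in> E1" "x \<noteq> z"
    and free: "ISK4_free (insert x' V1) (E1 - {{x,z}} \<union> {{x,x'},{x',z}})"
  shows "ISK4_free V1 E1"
  unfolding ISK4_free_def
proof
  define E2 where "E2 = E1 - {{x,z}} \<union> {{x,x'},{x',z}}"
  assume "\<exists>S\<subseteq>V1. subdivK4 S (induced E1 S)"
  then obtain S where S: "S \<subseteq> V1" "subdivK4 S (induced E1 S)" by blast
  show False
  proof (cases "x \<in> S \<and> z \<in> S")
    case False
    have "induced E2 S = induced E1 S" unfolding E2_def induced_def using False x' S(1) by auto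
    then have "subdivK4 S (induced E2 S)" "S \<subseteq> insert x' V1" using S by auto
    then show False using free unfolding ISK4_free_def E2_def by blast
  next
    case True
    obtain a b c d ps where s: "sK4 S (induced E1 S) a b c d ps" using S(2) subdivK4_alt by metis
    have len: "length ps = 6" using s by (rule sK4_len)
    have "{x,z} \<in> induced E1 S" using True xz unfolding induced_def by auto
    then have "{x,z} \<in> (\<Union>i<6. path_edges (ps ! i))" using sK4_E[OF s] by simp
    then obtain i where i: "i < 6" "{x,z} \<in> path_edges (ps!i)" by blast
    define p where "p = ps!i"
    have pl: "path_list p (fst (ends a b c d ! i)) (snd (ends a b c d ! i))" unfolding p_def using s i(1) by (rule sK4_path)
    have setp: "set p \<subseteq> S" unfolding p_def using sK4_V[OF s] i(1) by auto
    obtain l r where "p = l @ [x,z] @ r \<or> p = l @ [z,x] @ r" using pe_split[OF i(2)[folded p_def]] by blast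
    then obtain s0 t0 where lr: "p = l @ [s0,t0] @ r" "{s0,t0} = {x,z}"
    proof
      assume "p = l @ [x,z] @ r" then show ?thesis using that[of x z] by blast
    next
      assume "p = l @ [z,x] @ r" then show ?thesis using that[of z x] insert_commute by blast
    qed
    define p' where "p' = l @ [s0,x',t0] @ r"
    have x'p: "x' \<notin> set p" using setp S(1) x' by blast
    have dp: "distinct p" using pl by (simp add: path_list_def)
    have pe': "path_edges p' = path_edges p - {{x,z}} \<union> {{x,x'},{x',z}}"
    proof -
      have "path_edges p' = path_edges p - {{s0,t0}} \<union> {{s0,x'},{x',t0}}"
        unfolding p'_def lr(1) using pe_ins dp x'p lr(1) by metis
      moreover have "{{s0,x'},{x',t0}} = {{x,x'},{x',z}}" using lr(2) by (auto simp: doubleton_eq_iff)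
      ultimately show ?thesis using lr(2) by simp
    qed
    have setp': "set p' = insert x' (set p)" unfolding p'_def lr(1) by auto
    have hdp': "hd p' = hd p" unfolding p'_def lr(1) by (cases l) auto
    have lastp': "last p' = last p" unfolding p'_def lr(1) by (cases r rule: rev_cases) auto
    have pl': "path_list p' (fst (ends a b c d ! i)) (snd (ends a b c d ! i))"
      using pl x'p hdp' lastp' dp unfolding path_list_def p'_def lr(1) by auto
    have hdS: "hd p \<in> S" "last p \<in> S" using pl setp unfolding path_list_def
      by (metis hd_in_set last_in_set list.size(3) not_numeral_le_zero subsetD)+
    have intp': "interior p' = insert x' (interior p)"
      unfolding interior_def using setp' hdp' lastp' hdS x' S(1) by auto
    define ps' where "ps' = ps[i := p']"
    have ps'i: "\<And>k. k < 6 \<Longrightarrow> ps' ! k = (if k = i then p' else ps ! k)"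
      unfolding ps'_def using len i(1) by auto
    have setk: "\<And>k. k < 6 \<Longrightarrow> set (ps!k) \<subseteq> S" using sK4_V[OF s] by auto
    have intsub: "\<And>k. k < 6 \<Longrightarrow> interior (ps!k) \<subseteq> S" using setk unfolding interior_def by blast
    have x'S: "x' \<notin> S" using S(1) x' by blast
    have abcdS: "{a,b,c,d} \<subseteq> S"
    proof -
      have "hd (ps!0) = a" "last (ps!0) = b" "hd (ps!5) = c" "last (ps!5) = d"
        using sK4_path[OF s, of 0] sK4_path[OF s, of 5] by (simp_all add: path_list_def ends_def)
      moreover have "hd (ps!0) \<in> S" "last (ps!0) \<in> S" "hd (ps!5) \<in> S" "last (ps!5) \<in> S"
        using setk[of 0] setk[of 5] sK4_path[OF s, of 0] sK4_path[OF s, of 5]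
        by (simp_all add: path_list_def) (metis hd_in_set last_in_set list.size(3) not_numeral_le_zero subsetD)+
      ultimately show ?thesis by auto
    qed
    have new: "sK4 (insert x' S) (induced E2 (insert x' S)) a b c d ps'"
      unfolding sK4_def
    proof (intro conjI allI impI)
      show "length ps' = 6" unfolding ps'_def using len by simp
      show "distinct [a,b,c,d]" using sK4_dist[OF s] .
    next
      fix k :: nat assume k: "k < 6"
      show "path_list (ps' ! k) (fst (ends a b c d ! k)) (snd (ends a b c d ! k))"
        using ps'i[OF k] pl' sK4_path[OF s k] p_def by auto
    next
      fix k j :: nat assume k: "k < 6" and j: "j < 6" and kj: "k \<noteq> j"
      show "interior (ps' ! k) \<inter> interior (ps' ! j) = {}"
        using ps'i[OF k] ps'i[OF j] intp' sK4_int[OF s k j kj] intsub[OF k] intsub[OF j] x'S kj p_def by auto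
    next
      fix k :: nat assume k: "k < 6"
      show "interior (ps' ! k) \<inter> {a, b, c, d} = {}"
        using ps'i[OF k] intp' sK4_intabcd[OF s k] abcdS x'S p_def by auto
    next
      have "(\<Union>k<6. set (ps' ! k)) = insert x' (\<Union>k<6. set (ps ! k))"
      proof -
        have "(\<Union>k<6. set (ps' ! k)) = (\<Union>k<6. if k = i then insert x' (set (ps!k)) else set (ps!k))"
          using ps'i setp' p_def by (intro SUP_cong refl) auto
        also have "\<dots> = insert x' (\<Union>k<6. set (ps ! k))" using i(1) by (auto split: if_splits)
        finally show ?thesis .
      qed
      then show "insert x' S = (\<Union>k<6. set (ps' ! k))" using sK4_V[OF s] by simp
    next
      have uniq: "\<And>k. k < 6 \<Longrightarrow> k \<noteq> i \<Longrightarrow> {x,z} \<notin> path_edges (ps!k)"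
        using sK4_edge_unique[OF s i(1) _ _ i(2) xz(2)] by metis
      have "(\<Union>k<6. path_edges (ps' ! k)) = (\<Union>k<6. if k = i then path_edges (ps!k) - {{x,z}} \<union> {{x,x'},{x',z}} else path_edges (ps!k))"
        using ps'i pe' p_def by (intro SUP_cong refl) auto
      also have "\<dots> = (\<Union>k<6. path_edges (ps ! k)) - {{x,z}} \<union> {{x,x'},{x',z}}"
        using i(1) uniq by (auto split: if_splits)
      finally have "(\<Union>k<6. path_edges (ps' ! k)) = induced E1 S - {{x,z}} \<union> {{x,x'},{x',z}}"
        using sK4_E[OF s] by simp
      moreover have "induced E2 (insert x' S) = induced E1 S - {{x,z}} \<union> {{x,x'},{x',z}}"
        unfolding E2_def using induced_sub_E2[OF Esub x' S(1)] True xz(1) by blast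
      ultimately show "induced E2 (insert x' S) = (\<Union>k<6. path_edges (ps' ! k))" by simp
    qed
    then have "subdivK4 (insert x' S) (induced E2 (insert x' S))" using subdivK4_alt by metis
    moreover have "insert x' S \<subseteq> insert x' V1" using S(1) by blast
    ultimately show False using free unfolding ISK4_free_def E2_def by blast
  qed
qed




lemma card_le2: "A \<subseteq> {y,z} \<Longrightarrow> card A \<le> 2"
proof -
  assume "A \<subseteq> {y,z}"
  then have "card A \<le> card {y,z}" by (intro card_mono) auto
  moreover have "card {y,z} \<le> 2" by (cases "y = z") auto
  ultimately show ?thesis by linarith
qed

lemma subdiv_wheel:
  assumes Esub: "\<forall>e\<in>E1. e \<subseteq> V1" and x': "x' \<notin> V1" and xz: "{x,z} \<in> E1" "x \<noteq> z"
    and nb: "\<And>t. {t,x} \<in> E1 \<Longrightarrow> t = y \<or> t = z"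
    and free: "wheel_free (insert x' V1) (E1 - {{x,z}} \<union> {{x,x'},{x',z}})"
  shows "wheel_free V1 E1"
  unfolding wheel_free_def
proof
  define E2 where "E2 = E1 - {{x,z}} \<union> {{x,x'},{x',z}}"
  assume "\<exists>H w. hole V1 E1 H \<and> w \<in> V1 \<and> w \<notin> H \<and> 3 \<le> card {t \<in> H. {t, w} \<in> E1}"
  then obtain H w where h: "hole V1 E1 H" "w \<in> V1" "w \<notin> H" "3 \<le> card {t \<in> H. {t, w} \<in> E1}" by blast
  obtain cs where cs: "H \<subseteq> V1" "distinct cs" "length cs \<ge> 3" "set cs = H" "induced E1 H = cyc cs"
    using h(1) hole_alt by metis
  have fH: "finite H" using cs(4) by auto
  have wx: "w \<noteq> x"
  proof
    assume "w = x"
    then have "{t \<in> H. {t, w} \<in> E1} \<subseteq> {y,z}" using nb by auto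
    then show False using h(4) card_le2 by fastforce
  qed
  have contra: "\<not> (hole (insert x' V1) E2 H' \<and> w \<in> insert x' V1 \<and> w \<notin> H' \<and> 3 \<le> card {t \<in> H'. {t, w} \<in> E2})" for H'
    using free unfolding wheel_free_def E2_def by blast
  show False
  proof (cases "x \<in> H")
    case False
    have x'H: "x' \<notin> H" using cs(1) x' by blast
    have ind: "induced E2 H = induced E1 H" unfolding E2_def induced_def using False x'H by auto
    have "hole (insert x' V1) E2 H" using cs ind by (intro hole_alt[THEN iffD2] conjI exI[of _ cs]) auto
    moreover have "{t \<in> H. {t, w} \<in> E2} = {t \<in> H. {t, w} \<in> E1}"
    proof -
      have "{t, w} \<noteq> {x,z}" "{t, w} \<noteq> {x,x'}" "{t,w} \<noteq> {x',z}" if "t \<in> H" for t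
        using that False wx x'H h(2) x' by (auto simp: doubleton_eq_iff)
      then show ?thesis unfolding E2_def by blast
    qed
    ultimately show False using contra[of H] h by auto
  next
    case True
    have zH: "z \<in> H"
    proof -
      obtain k rest where kr: "rotate k cs = x # rest" using rotate_to_hd True cs(4) by metis
      have d1: "distinct (x # rest)" using kr cs(2) by (metis distinct_rotate)
      have lr: "length rest \<ge> 2" using kr cs(3) by (metis length_rotate length_Cons Suc_le_mono numeral_3_eq_3 numeral_2_eq_2)
      have c: "cyc (x # rest) = induced E1 H" using kr cs(5) by (metis cyc_rotate)
      have st: "set (x # rest) = H" using kr cs(4) by (metis set_rotate)
      have rne: "rest \<noteq> []" using lr by auto
      have "{x, hd rest} \<in> E1" "{x, last rest} \<in> E1" using cyc_hd_in[OF rne, of x] c unfolding induced_def by auto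
      then have "hd rest = y \<or> hd rest = z" "last rest = y \<or> last rest = z" using nb by (metis insert_commute)+
      moreover have "hd rest \<noteq> last rest"
      proof -
        obtain b m where "rest = b # m" "m \<noteq> []" using lr by (cases rest; cases "tl rest") auto
        then show ?thesis using d1 by auto
      qed
      ultimately have "z = hd rest \<or> z = last rest" by metis
      then show ?thesis using st rne by auto
    qed
    have xzc: "{x,z} \<in> cyc cs" using cs(5) True zH xz(1) unfolding induced_def by auto
    obtain cs2 where c2: "distinct cs2" "length cs2 = length cs" "set cs2 = set cs" "cyc cs2 = cyc cs" "{last cs2, hd cs2} = {x,z}"
      using rotate_edge[OF cs(2,3) xzc] by blast
    have ne2: "cs2 \<noteq> []" using c2(2) cs(3) by auto
    define cs' where "cs' = cs2 @ [x']"
    have x'H: "x' \<notin> H" using cs(1) x' by blast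
    have "{last cs2, hd cs2} \<notin> path_edges cs2" using pe_closing_not[of cs2] c2(1,2) cs(3) by simp
    then have pe2: "path_edges cs2 = cyc cs2 - {{x,z}}"
      using c2(5) unfolding cyc_def by auto
    have "cyc cs' = insert {last cs2, x'} (path_edges cs2) \<union> {{x', hd cs2}}"
      unfolding cs'_def cyc_def using pe_snoc[OF ne2] ne2 by simp
    also have "\<dots> = induced E1 H - {{x,z}} \<union> {{x,x'},{x',z}}"
      using pe2 c2(4,5) cs(5) by (auto simp: doubleton_eq_iff)
    also have "\<dots> = induced E2 (insert x' H)"
      unfolding E2_def using induced_sub_E2[OF Esub x' cs(1) True zH xz(1)] by simp
    finally have cyc': "cyc cs' = induced E2 (insert x' H)" .
    have "distinct cs'" "length cs' \<ge> 3" "set cs' = insert x' H"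
      unfolding cs'_def using c2 cs x'H by auto
    moreover have "insert x' H \<subseteq> insert x' V1" using cs(1) by blast
    ultimately have hole': "hole (insert x' V1) E2 (insert x' H)"
      using cyc' by (intro hole_alt[THEN iffD2] conjI exI[of _ cs']) simp_all
    have wx': "w \<noteq> x'" using h(2) x' by blast
    have "{t \<in> H. {t, w} \<in> E1} \<subseteq> {t \<in> insert x' H. {t, w} \<in> E2}"
    proof
      fix t assume t: "t \<in> {t \<in> H. {t, w} \<in> E1}"
      have "w \<noteq> z" using zH h(3) by blast
      then have "{t, w} \<noteq> {x,z}" using wx by (auto simp: doubleton_eq_iff)
      then show "t \<in> {t \<in> insert x' H. {t, w} \<in> E2}" using t unfolding E2_def by auto
    qed
    then have "card {t \<in> H. {t, w} \<in> E1} \<le> card {t \<in> insert x' H. {t, w} \<in> E2}"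
      using fH by (intro card_mono) auto
    then have "3 \<le> card {t \<in> insert x' H. {t, w} \<in> E2}" using h(4) by linarith
    then show False using contra[of "insert x' H"] hole' h(2,3) wx' by auto
  qed
qed




lemma img_sub_iff: "inj_on f V \<Longrightarrow> A \<subseteq> V \<Longrightarrow> B \<subseteq> V \<Longrightarrow> f ` A \<subseteq> f ` B \<longleftrightarrow> A \<subseteq> B"
  using inj_on_image_mem_iff by (metis image_mono image_subset_iff subset_iff)

lemma induced_map:
  assumes inj: "inj_on f V" and Esub: "\<forall>e\<in>E. e \<subseteq> V" and S: "S \<subseteq> V"
  shows "induced ((\<lambda>e. f ` e) ` E) (f ` S) = (\<lambda>e. f ` e) ` induced E S"
proof (rule set_eqI, rule iffI)
  fix e' assume "e' \<in> induced ((\<lambda>e. f ` e) ` E) (f ` S)"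
  then obtain e where e: "e \<in> E" "e' = f ` e" "f ` e \<subseteq> f ` S" unfolding induced_def by blast
  then have "e \<subseteq> S" using img_sub_iff[OF inj] Esub S by blast
  then show "e' \<in> (\<lambda>e. f ` e) ` induced E S" using e unfolding induced_def by blast
next
  fix e' assume "e' \<in> (\<lambda>e. f ` e) ` induced E S"
  then show "e' \<in> induced ((\<lambda>e. f ` e) ` E) (f ` S)" unfolding induced_def by blast
qed

lemma interior_map: "inj_on f (set p) \<Longrightarrow> p \<noteq> [] \<Longrightarrow> interior (map f p) = f ` interior p"
  unfolding interior_def by (simp add: hd_map last_map inj_on_image_set_diff)

lemma path_list_map: assumes "inj_on f (set p)" "path_list p s t" shows "path_list (map f p) (f s) (f t)"
proof -
  have "p \<noteq> []" using assms(2) unfolding path_list_def by auto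
  then show ?thesis using assms unfolding path_list_def by (simp add: distinct_map hd_map last_map)
qed

lemma iso_isk4:
  assumes inj: "inj_on f V" and Esub: "\<forall>e\<in>E. e \<subseteq> V"
    and free: "ISK4_free (f ` V) ((\<lambda>e. f ` e) ` E)"
  shows "ISK4_free V E"
  unfolding ISK4_free_def
proof
  assume "\<exists>S\<subseteq>V. subdivK4 S (induced E S)"
  then obtain S where S: "S \<subseteq> V" "subdivK4 S (induced E S)" by blast
  obtain a b c d ps where s: "sK4 S (induced E S) a b c d ps" using S(2) subdivK4_alt by metis
  have len: "length ps = 6" using s by (rule sK4_len)
  have setk: "\<And>k. k < 6 \<Longrightarrow> set (ps!k) \<subseteq> S" using sK4_V[OF s] by auto
  have injk: "\<And>k. k < 6 \<Longrightarrow> inj_on f (set (ps!k))" using setk S(1) inj inj_on_subset by (metis subset_trans)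
  have nek: "\<And>k. k < 6 \<Longrightarrow> ps!k \<noteq> []" using sK4_path[OF s] unfolding path_list_def by fastforce
  have intk: "\<And>k. k < 6 \<Longrightarrow> interior (ps!k) \<subseteq> S" using setk unfolding interior_def by blast
  have abcdS: "{a,b,c,d} \<subseteq> S"
  proof -
    have "hd (ps!0) = a" "last (ps!0) = b" "hd (ps!5) = c" "last (ps!5) = d"
      using sK4_path[OF s, of 0] sK4_path[OF s, of 5] by (simp_all add: path_list_def ends_def)
    moreover have "hd (ps!0) \<in> S" "last (ps!0) \<in> S" "hd (ps!5) \<in> S" "last (ps!5) \<in> S"
      using setk[of 0] setk[of 5] nek[of 0] nek[of 5] by auto
    ultimately show ?thesis by auto
  qed
  have injS: "inj_on f S" using inj S(1) inj_on_subset by blast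
  define ps' where "ps' = map (map f) ps"
  have ps'k: "\<And>k. k < 6 \<Longrightarrow> ps' ! k = map f (ps!k)" unfolding ps'_def using len by simp
  have "sK4 (f ` S) (induced ((\<lambda>e. f ` e) ` E) (f ` S)) (f a) (f b) (f c) (f d) ps'"
    unfolding sK4_def
  proof (intro conjI allI impI)
    show "length ps' = 6" unfolding ps'_def using len by simp
    show "distinct [f a, f b, f c, f d]" using sK4_dist[OF s] injS abcdS
      by (simp add: inj_on_eq_iff[OF injS])
  next
    fix k :: nat assume k: "k < 6"
    have "fst (ends (f a) (f b) (f c) (f d) ! k) = f (fst (ends a b c d ! k))"
         "snd (ends (f a) (f b) (f c) (f d) ! k) = f (snd (ends a b c d ! k))"
      using k by (auto simp: ends_def less_Suc_eq numeral_eq_Suc)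
    then show "path_list (ps' ! k) (fst (ends (f a) (f b) (f c) (f d) ! k)) (snd (ends (f a) (f b) (f c) (f d) ! k))"
      using path_list_map[OF injk[OF k] sK4_path[OF s k]] ps'k[OF k] by simp
  next
    fix k j :: nat assume k: "k < 6" and j: "j < 6" and kj: "k \<noteq> j"
    have "interior (ps' ! k) \<inter> interior (ps' ! j) = f ` (interior (ps!k) \<inter> interior (ps!j))"
      using ps'k[OF k] ps'k[OF j] interior_map[OF injk[OF k] nek[OF k]] interior_map[OF injk[OF j] nek[OF j]]
        inj_on_image_Int[OF injS intk[OF k] intk[OF j]] by simp
    then show "interior (ps' ! k) \<inter> interior (ps' ! j) = {}" using sK4_int[OF s k j kj] by simp
  next
    fix k :: nat assume k: "k < 6"
    have "interior (ps' ! k) \<inter> {f a, f b, f c, f d} = f ` (interior (ps!k) \<inter> {a,b,c,d})"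
      using ps'k[OF k] interior_map[OF injk[OF k] nek[OF k]] inj_on_image_Int[OF injS intk[OF k] abcdS] by simp
    then show "interior (ps' ! k) \<inter> {f a, f b, f c, f d} = {}" using sK4_intabcd[OF s k] by simp
  next
    have "(\<Union>k<6. set (ps' ! k)) = (\<Union>k<6. f ` set (ps ! k))" using ps'k by (intro SUP_cong refl) auto
    then show "f ` S = (\<Union>k<6. set (ps' ! k))" using sK4_V[OF s] by auto
  next
    have "(\<Union>k<6. path_edges (ps' ! k)) = (\<Union>k<6. (\<lambda>e. f ` e) ` path_edges (ps ! k))"
      by (intro SUP_cong refl) (simp add: ps'k pe_map)
    also have "\<dots> = (\<lambda>e. f ` e) ` (\<Union>k<6. path_edges (ps ! k))" by auto
    also have "\<dots> = (\<lambda>e. f ` e) ` induced E S" using sK4_E[OF s] by simp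
    also have "\<dots> = induced ((\<lambda>e. f ` e) ` E) (f ` S)" using induced_map[OF inj Esub S(1)] by simp
    finally show "induced ((\<lambda>e. f ` e) ` E) (f ` S) = (\<Union>k<6. path_edges (ps' ! k))" by simp
  qed
  then have "subdivK4 (f ` S) (induced ((\<lambda>e. f ` e) ` E) (f ` S))" using subdivK4_alt by metis
  moreover have "f ` S \<subseteq> f ` V" using S(1) by blast
  ultimately show False using free unfolding ISK4_free_def by blast
qed

lemma iso_wheel:
  assumes inj: "inj_on f V" and Esub: "\<forall>e\<in>E. e \<subseteq> V"
    and free: "wheel_free (f ` V) ((\<lambda>e. f ` e) ` E)"
  shows "wheel_free V E"
  unfolding wheel_free_def
proof
  assume "\<exists>H w. hole V E H \<and> w \<in> V \<and> w \<notin> H \<and> 3 \<le> card {t \<in> H. {t, w} \<in> E}"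
  then obtain H w where h: "hole V E H" "w \<in> V" "w \<notin> H" "3 \<le> card {t \<in> H. {t, w} \<in> E}" by blast
  obtain cs where cs: "H \<subseteq> V" "distinct cs" "length cs \<ge> 3" "set cs = H" "induced E H = cyc cs"
    using h(1) unfolding hole_alt by blast
  have injH: "inj_on f H" using inj cs(1) inj_on_subset by blast
  have ne: "cs \<noteq> []" using cs(3) by auto
  have "induced ((\<lambda>e. f ` e) ` E) (f ` H) = cyc (map f cs)"
    using induced_map[OF inj Esub cs(1)] cs(5) by (simp add: cyc_map[OF ne])
  moreover have "distinct (map f cs)" using cs injH by (simp add: distinct_map)
  moreover have "f ` H \<subseteq> f ` V" using cs(1) by blast
  ultimately have hole': "hole (f ` V) ((\<lambda>e. f ` e) ` E) (f ` H)"
    using cs by (intro hole_alt[THEN iffD2] conjI exI[of _ "map f cs"]) simp_all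
  have fw: "f w \<in> f ` V" "f w \<notin> f ` H" using h(2,3) cs(1) inj_on_image_mem_iff[OF inj h(2) cs(1)] by auto
  have eq: "{t \<in> f ` H. {t, f w} \<in> (\<lambda>e. f ` e) ` E} = f ` {t \<in> H. {t, w} \<in> E}"
  proof (rule set_eqI, rule iffI)
    fix t' assume "t' \<in> {t \<in> f ` H. {t, f w} \<in> (\<lambda>e. f ` e) ` E}"
    then obtain t e where t: "t \<in> H" "t' = f t" "e \<in> E" "{f t, f w} = f ` e" by blast
    have "f ` {t, w} = f ` e" using t by simp
    then have "{t,w} = e" using inj_on_image_eq_iff[OF inj, of "{t,w}" e] t(1,3) cs(1) h(2) Esub by blast
    then show "t' \<in> f ` {t \<in> H. {t, w} \<in> E}" using t by blast
  next
    fix t' assume "t' \<in> f ` {t \<in> H. {t, w} \<in> E}"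
    then obtain t where t: "t \<in> H" "{t,w} \<in> E" "t' = f t" by blast
    then have "{t', f w} = f ` {t,w}" by simp
    then show "t' \<in> {t \<in> f ` H. {t, f w} \<in> (\<lambda>e. f ` e) ` E}" using t by blast
  qed
  have "card (f ` {t \<in> H. {t, w} \<in> E}) = card {t \<in> H. {t, w} \<in> E}"
    using injH by (intro card_image) (auto intro: inj_on_subset)
  then have "3 \<le> card {t \<in> f ` H. {t, f w} \<in> (\<lambda>e. f ` e) ` E}" using eq h(4) by simp
  then show False using free hole' fw unfolding wheel_free_def by blast
qed

lemma induced_isk4: assumes "ISK4_free V E" "W \<subseteq> V" shows "ISK4_free W (induced E W)"
  unfolding ISK4_free_def
proof
  assume "\<exists>S\<subseteq>W. subdivK4 S (induced (induced E W) S)"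
  then obtain S where S: "S \<subseteq> W" "subdivK4 S (induced (induced E W) S)" by blast
  have "induced (induced E W) S = induced E S" using S(1) unfolding induced_def by auto
  then show False using S assms unfolding ISK4_free_def by auto
qed

lemma induced_wheel: assumes "wheel_free V E" "W \<subseteq> V" shows "wheel_free W (induced E W)"
  unfolding wheel_free_def
proof
  assume "\<exists>H w. hole W (induced E W) H \<and> w \<in> W \<and> w \<notin> H \<and> 3 \<le> card {x \<in> H. {x, w} \<in> induced E W}"
  then obtain H w where h: "hole W (induced E W) H" "w \<in> W" "w \<notin> H" "3 \<le> card {x \<in> H. {x, w} \<in> induced E W}" by blast
  have HW: "H \<subseteq> W" using h(1) unfolding hole_def by blast
  have ii: "induced (induced E W) H = induced E H" using HW unfolding induced_def by auto
  have "hole V E H" using h(1) HW assms(2) ii unfolding hole_def by auto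
  moreover have "{x \<in> H. {x, w} \<in> induced E W} = {x \<in> H. {x, w} \<in> E}" using HW h(2) unfolding induced_def by auto
  ultimately show False using assms(1) h assms(2) unfolding wheel_free_def by auto
qed




definition free2 :: "'a set \<Rightarrow> 'a set set \<Rightarrow> bool" where
  "free2 V E \<longleftrightarrow> ISK4_free V E \<and> wheel_free V E"

lemma step:
  assumes pre: "pre \<noteq> []" and d: "distinct (pre @ [x,t,v])" and xA: "x \<notin> A" and tA: "t \<notin> A" and vA: "v \<in> A"
    and IA: "\<forall>e\<in>IA. e \<subseteq> A"
    and free: "free2 (A \<union> set (pre @ [x,t,v])) (IA \<union> path_edges (pre @ [x,t,v]))"
  shows "free2 (A \<union> set (pre @ [x,v])) (IA \<union> path_edges (pre @ [x,v]))"
proof -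
  define V1 where "V1 = A \<union> set (pre @ [x,v])"
  define E1 where "E1 = IA \<union> path_edges (pre @ [x,v])"
  have pe1: "path_edges (pre @ [x,v]) = insert {last pre, x} (insert {x,v} (path_edges pre))"
    using pe_append[of pre "[x,v]"] pre by auto
  have pe2: "path_edges (pre @ [x,t,v]) = insert {last pre, x} (insert {x,t} (insert {t,v} (path_edges pre)))"
    using pe_append[of pre "[x,t,v]"] pre by auto
  have Esub: "\<forall>e\<in>E1. e \<subseteq> V1" unfolding E1_def V1_def using IA pe_sub by fast
  have x': "t \<notin> V1" unfolding V1_def using tA d by auto
  have xz: "{x,v} \<in> E1" "x \<noteq> v" unfolding E1_def using pe1 d by auto
  have xpre: "x \<notin> set pre" "v \<notin> set pre" using d by auto
  have nIA: "\<And>s. {s,x} \<notin> IA" using IA xA by blast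
  have npe: "\<And>s. {s,x} \<notin> path_edges pre" using xpre pe_sub by fast
  have nb: "\<And>s. {s,x} \<in> E1 \<Longrightarrow> s = last pre \<or> s = v"
    unfolding E1_def pe1 using nIA npe by (auto simp: doubleton_eq_iff)
  have xvIA: "{x,v} \<notin> IA" using nIA by (metis insert_commute)
  have xvpe: "{x,v} \<notin> path_edges pre" using xpre pe_sub by fast
  have "{last pre, x} \<noteq> {x,v}" using xpre pre by (auto simp: doubleton_eq_iff)
  then have E2: "E1 - {{x,v}} \<union> {{x,t},{t,v}} = IA \<union> path_edges (pre @ [x,t,v])"
    unfolding E1_def pe1 pe2 using xvIA xvpe by auto
  have V2: "insert t V1 = A \<union> set (pre @ [x,t,v])" unfolding V1_def by auto
  have f1: "ISK4_free (insert t V1) (E1 - {{x,v}} \<union> {{x,t},{t,v}})"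
   and f2: "wheel_free (insert t V1) (E1 - {{x,v}} \<union> {{x,t},{t,v}})"
    using free unfolding E2 V2 free2_def by auto
  have "ISK4_free V1 E1" by (rule subdiv_isk4[OF Esub x' xz f1])
  moreover have "wheel_free V1 E1" by (rule subdiv_wheel[OF Esub x' xz nb f2])
  ultimately show ?thesis unfolding free2_def V1_def E1_def by simp
qed

lemma chain:
  assumes "ms \<noteq> []" "distinct (u # ms @ [v])" "set ms \<inter> A = {}" "u \<in> A" "v \<in> A" "\<forall>e\<in>IA. e \<subseteq> A"
    "free2 (A \<union> set (u # ms @ [v])) (IA \<union> path_edges (u # ms @ [v]))"
  shows "free2 (A \<union> {u, hd ms, v}) (IA \<union> {{u, hd ms}, {hd ms, v}})"
  using assms
proof (induction ms rule: rev_induct)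
  case Nil then show ?case by simp
next
  case (snoc t ms0)
  show ?case
  proof (cases "ms0 = []")
    case True
    then show ?thesis using snoc.prems(7) by (simp add: insert_commute)
  next
    case False
    define pre where "pre = u # butlast ms0"
    define x where "x = last ms0"
    have ms0: "ms0 = butlast ms0 @ [x]" unfolding x_def using False by simp
    have L: "u # (ms0 @ [t]) @ [v] = pre @ [x,t,v]" unfolding pre_def using ms0 by (metis append.assoc append_Cons append_Nil)
    have L0: "u # ms0 @ [v] = pre @ [x,v]" unfolding pre_def using ms0 by (metis append.assoc append_Cons append_Nil)
    have "x \<in> set ms0" unfolding x_def using False by simp
    then have xA: "x \<notin> A" "t \<notin> A" using snoc.prems(3) by auto
    have d: "distinct (pre @ [x,t,v])" using snoc.prems(2) L by metis
    have fr: "free2 (A \<union> set (pre @ [x,t,v])) (IA \<union> path_edges (pre @ [x,t,v]))" using snoc.prems(7) L by metis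
    have "pre \<noteq> []" unfolding pre_def by simp
    have "free2 (A \<union> set (pre @ [x,v])) (IA \<union> path_edges (pre @ [x,v]))"
      by (rule step[OF \<open>pre \<noteq> []\<close> d xA snoc.prems(5,6) fr])
    then have "free2 (A \<union> set (u # ms0 @ [v])) (IA \<union> path_edges (u # ms0 @ [v]))" by (simp only: L0)
    moreover have "distinct (u # ms0 @ [v])" "set ms0 \<inter> A = {}" using snoc.prems(2,3) by auto
    ultimately have "free2 (A \<union> {u, hd ms0, v}) (IA \<union> {{u, hd ms0}, {hd ms0, v}})"
      using snoc.IH False snoc.prems(4-6) by blast
    then show ?thesis using False by simp
  qed
qed




lemma adj_sym: "adj_in S E x y \<Longrightarrow> adj_in S E y x"
  unfolding adj_in_def by (simp add: insert_commute)

lemma rt_sym: "(adj_in S E)\<^sup>*\<^sup>* x y \<Longrightarrow> (adj_in S E)\<^sup>*\<^sup>* y x"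
proof (induction rule: rtranclp_induct)
  case base then show ?case by simp
next
  case (step y z) show ?case by (rule converse_rtranclp_into_rtranclp[OF adj_sym[OF step(2)] step(3)])
qed

lemma comp_member: assumes "C \<in> components S E" "y \<in> C" shows "C = {z \<in> S. (adj_in S E)\<^sup>*\<^sup>* y z}"
proof -
  obtain x where x: "x \<in> S" "C = {z \<in> S. (adj_in S E)\<^sup>*\<^sup>* x z}" using assms(1) unfolding components_def by blast
  then have xy: "(adj_in S E)\<^sup>*\<^sup>* x y" using assms(2) by blast
  have "(adj_in S E)\<^sup>*\<^sup>* x z \<longleftrightarrow> (adj_in S E)\<^sup>*\<^sup>* y z" for z
  proof
    assume "(adj_in S E)\<^sup>*\<^sup>* x z" then show "(adj_in S E)\<^sup>*\<^sup>* y z" using rt_sym[OF xy] by (rule rtranclp_trans[rotated])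
  next
    assume "(adj_in S E)\<^sup>*\<^sup>* y z" then show "(adj_in S E)\<^sup>*\<^sup>* x z" using xy by (rule rtranclp_trans[rotated])
  qed
  then show ?thesis using x by auto
qed

lemma comp_sub: "C \<in> components S E \<Longrightarrow> C \<subseteq> S"
  unfolding components_def by blast

lemma comp_closed: assumes "C \<in> components S E" "y \<in> C" "z \<in> S" "{y,z} \<in> E" shows "z \<in> C"
proof -
  have C: "C = {z \<in> S. (adj_in S E)\<^sup>*\<^sup>* y z}" by (rule comp_member[OF assms(1,2)])
  have "y \<in> S" using assms(1,2) comp_sub by blast
  then have "adj_in S E y z" using assms(3,4) unfolding adj_in_def by simp
  then show ?thesis using C assms(3) by auto
qed

lemma comp_noedge: assumes "C \<in> components S E" "C' \<in> components S E" "C \<noteq> C'" "y \<in> C" "z \<in> C'" "{y,z} \<in> E"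
  shows False
proof -
  have "z \<in> C" using comp_closed[OF assms(1,4) _ assms(6)] assms(2,5) comp_sub by blast
  then have "C = {w \<in> S. (adj_in S E)\<^sup>*\<^sup>* z w}" "C' = {w \<in> S. (adj_in S E)\<^sup>*\<^sup>* z w}"
    using comp_member[OF assms(1) \<open>z \<in> C\<close>] comp_member[OF assms(2,5)] by simp_all
  then show False using assms(3) by simp
qed

lemma comp_disj: assumes "C \<in> components S E" "C' \<in> components S E" "C \<noteq> C'" "y \<in> C" shows "y \<notin> C'"
proof
  assume "y \<in> C'"
  then have "C' = {z \<in> S. (adj_in S E)\<^sup>*\<^sup>* y z}" by (rule comp_member[OF assms(2)])
  moreover have "C = {z \<in> S. (adj_in S E)\<^sup>*\<^sup>* y z}" by (rule comp_member[OF assms(1,4)])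
  ultimately show False using assms(3) by simp
qed

lemma comp_ne: "C \<in> components S E \<Longrightarrow> C \<noteq> {}"
  unfolding components_def by blast

lemma comps_finite: "finite S \<Longrightarrow> finite (components S E)"
proof -
  assume "finite S"
  moreover have "components S E \<subseteq> Pow S" unfolding components_def by blast
  ultimately show ?thesis using finite_subset by blast
qed

lemma nbr_exists:
  assumes g: "graph V E" and n1: "\<not> has_1cutset V E" and uv: "u \<in> V" "v \<in> V"
    and C: "C \<in> components (V - {u,v}) E" and C': "C' \<in> components (V - {u,v}) E" and ne: "C \<noteq> C'"
  shows "\<exists>a\<in>C'. {u,a} \<in> E"
proof (rule ccontr)
  assume no: "\<not> (\<exists>a\<in>C'. {u,a} \<in> E)"
  define S where "S = V - {u,v}"
  define S2 where "S2 = V - {v}"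
  obtain c' where c': "c' \<in> C'" using comp_ne[OF C'] by blast
  obtain c where c: "c \<in> C" using comp_ne[OF C] by blast
  have "C \<subseteq> V - {u,v}" "C' \<subseteq> V - {u,v}" using comp_sub[OF C] comp_sub[OF C'] .
  then have c'S: "c' \<in> S2" "c \<in> S2" using c c' unfolding S2_def by blast+
  have reach: "(adj_in S2 E)\<^sup>*\<^sup>* c' y \<Longrightarrow> y \<in> C'" for y
  proof (induction rule: rtranclp_induct)
    case base then show ?case using c' .
  next
    case (step y z)
    then have "z \<in> S2" "{y,z} \<in> E" unfolding adj_in_def by auto
    moreover have "z \<noteq> u" proof
      assume "z = u" then have "{u,y} \<in> E" using \<open>{y,z} \<in> E\<close> by (simp add: insert_commute)
      then show False using no step(3) by blast
    qed
    ultimately have "z \<in> V - {u,v}" unfolding S2_def by blast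
    then show ?case using comp_closed[OF C' step(3)] \<open>{y,z} \<in> E\<close> by blast
  qed
  define K1 where "K1 = {y \<in> S2. (adj_in S2 E)\<^sup>*\<^sup>* c' y}"
  define K2 where "K2 = {y \<in> S2. (adj_in S2 E)\<^sup>*\<^sup>* c y}"
  have "K1 \<in> components S2 E" "K2 \<in> components S2 E" unfolding K1_def K2_def components_def using c'S by blast+
  moreover have "c \<in> K2" using c'S unfolding K2_def by simp
  moreover have "c \<notin> K1" using reach comp_disj[OF C C' ne c] unfolding K1_def by blast
  ultimately have "K1 \<noteq> K2" "{K1, K2} \<subseteq> components S2 E" by auto
  moreover have "finite S2" using g unfolding graph_def S2_def by simp
  then have "finite (components S2 E)" by (rule comps_finite)
  ultimately have "card {K1, K2} \<le> card (components S2 E)" "card {K1,K2} = 2"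
    using card_mono[of "components S2 E" "{K1,K2}"] by simp_all
  then have "has_1cutset V E" unfolding has_1cutset_def S2_def using uv by auto
  then show False using n1 by simp
qed

lemma walk_exists:
  assumes "(adj_in S E)\<^sup>*\<^sup>* a b" "a \<in> S"
  shows "\<exists>L. L \<noteq> [] \<and> hd L = a \<and> last L = b \<and> path_edges L \<subseteq> E \<and> set L \<subseteq> {y \<in> S. (adj_in S E)\<^sup>*\<^sup>* a y}"
  using assms(1)
proof (induction rule: rtranclp_induct)
  case base then show ?case using assms(2) by (intro exI[of _ "[a]"]) simp
next
  case (step y z)
  then obtain L where L: "L \<noteq> []" "hd L = a" "last L = y" "path_edges L \<subseteq> E" "set L \<subseteq> {y \<in> S. (adj_in S E)\<^sup>*\<^sup>* a y}" by blast
  have "z \<in> S" "{y,z} \<in> E" using step(2) unfolding adj_in_def by auto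
  then show ?case using L pe_snoc[OF L(1), of z] step(1,2)
    by (intro exI[of _ "L @ [z]"]) (auto simp: hd_append)
qed




lemma pe_left: "path_edges X \<subseteq> path_edges (X @ Y)"
  using pe_append[of X Y] by auto
lemma pe_right: "path_edges Y \<subseteq> path_edges (X @ Y)"
  using pe_append[of X Y] by auto

lemma shortest_path:
  assumes g: "\<forall>e\<in>E. \<exists>x y. e = {x,y} \<and> x \<noteq> y"
    and uv: "{u,v} \<notin> E" "u \<noteq> v" "u \<notin> D" "v \<notin> D"
    and ex: "ms0 \<noteq> [] \<and> set ms0 \<subseteq> D \<and> path_edges (u # ms0 @ [v]) \<subseteq> E"
  shows "\<exists>ms. ms \<noteq> [] \<and> set ms \<subseteq> D \<and> distinct (u # ms @ [v]) \<and> path_edges (u # ms @ [v]) \<subseteq> E \<and>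
     (\<forall>a\<in>set (u # ms @ [v]). \<forall>b\<in>set (u # ms @ [v]). {a,b} \<in> E \<longrightarrow> {a,b} \<in> path_edges (u # ms @ [v]))"
proof -
  define P where "P ms \<longleftrightarrow> ms \<noteq> [] \<and> set ms \<subseteq> D \<and> path_edges (u # ms @ [v]) \<subseteq> E" for ms
  obtain ms where ms: "P ms" and min: "\<And>ms'. P ms' \<Longrightarrow> length ms \<le> length ms'"
    using ex_has_least_nat[of P ms0 length] ex unfolding P_def by blast
  have msP: "ms \<noteq> []" "set ms \<subseteq> D" "path_edges (u # ms @ [v]) \<subseteq> E" using ms unfolding P_def by auto
  define L where "L = u # ms @ [v]"
  have uL: "count_list L u = 1" "count_list L v = 1"
    unfolding L_def using msP(2) uv by (auto simp: count_list_0_iff)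
  have setL: "set L = {u,v} \<union> set ms" unfolding L_def by auto
  have short: "length L \<le> length L'"
    if h: "hd L' = u" "last L' = v" "\<And>x. count_list L' x \<le> count_list L x" "c \<in> set L'" "c \<notin> {u,v}"
          "path_edges L' \<subseteq> E" for L' c
  proof -
    have "L' \<noteq> []" using h(4) by auto
    then obtain rest where r: "L' = u # rest" using h(1) by (cases L') auto
    have "rest \<noteq> []" using r h(2) uv(2) by auto
    then obtain ms' where ms': "rest = ms' @ [v]" using h(2) r by (metis append_butlast_last_id last_ConsR)
    have L': "L' = u # ms' @ [v]" using r ms' by simp
    have "count_list L' u \<le> 1" "count_list L' v \<le> 1" using h(3) uL by metis+
    then have nuv: "u \<notin> set ms'" "v \<notin> set ms'" unfolding L' using uv(2) by (auto simp: count_list_0_iff[symmetric])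
    have "set ms' \<subseteq> D"
    proof
      fix x assume x: "x \<in> set ms'"
      then have "count_list ms' x \<noteq> 0" by (simp add: count_list_0_iff)
      then have "count_list L' x \<noteq> 0" unfolding L' by simp
      then have "count_list L x \<noteq> 0" using h(3)[of x] by linarith
      then have "x \<in> set L" by (simp add: count_list_0_iff)
      then show "x \<in> D" using x nuv setL msP(2) by auto
    qed
    moreover have "ms' \<noteq> []" using h(4,5) L' by auto
    ultimately have "P ms'" unfolding P_def using h(6) L' by simp
    then have "length ms \<le> length ms'" by (rule min)
    then show ?thesis unfolding L_def L' by simp
  qed
  have peL: "path_edges L \<subseteq> E" unfolding L_def using msP(3) .
  have hdL: "hd L = u" "last L = v" unfolding L_def by simp_all
  have dist: "distinct L"
  proof (rule ccontr)
    assume "\<not> distinct L"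
    then obtain p q r a where d: "L = p @ [a] @ q @ [a] @ r" using not_distinct_decomp by blast
    define L' where "L' = (p @ [a]) @ r"
    have "count_list L a \<ge> 2" unfolding d by simp
    then have "a \<notin> {u,v}" using uL by auto
    moreover have "hd L' = u" "last L' = v" using hdL unfolding d L'_def by (auto simp: hd_append last_append split: if_splits)
    moreover have "\<And>x. count_list L' x \<le> count_list L x" unfolding d L'_def by simp
    moreover have "path_edges L' \<subseteq> E"
    proof -
      have "path_edges L' \<subseteq> path_edges (p @ [a]) \<union> path_edges (a # r)"
        unfolding L'_def using pe_append[of "p @ [a]" r] pe_Cons[of r a] by (auto split: if_splits)
      moreover have "path_edges (p @ [a]) \<subseteq> path_edges L" unfolding d using pe_left[of "p @ [a]" "q @ [a] @ r"] by simp
      moreover have "path_edges (a # r) \<subseteq> path_edges L" unfolding d using pe_right[where X="p @ [a] @ q" and Y="a # r"] by simp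
      ultimately show ?thesis using peL by blast
    qed
    ultimately have "length L \<le> length L'" using short[of L' a] unfolding L'_def by simp
    then show False unfolding d L'_def by simp
  qed
  have chord: "{a,b} \<in> path_edges L" if d: "L = p @ [a] @ q @ [b] @ r" and e: "{a,b} \<in> E" for p q r a b
  proof (cases "q = []")
    case True
    then have "L = p @ ([a,b] @ r)" using d by simp
    then show ?thesis using pe_right[where X=p and Y="[a,b] @ r"] by auto
  next
    case False
    define L' where "L' = (p @ [a]) @ (b # r)"
    have ab: "a \<notin> {u,v} \<or> b \<notin> {u,v}"
    proof (rule ccontr)
      assume "\<not> (a \<notin> {u,v} \<or> b \<notin> {u,v})"
      moreover have "a \<noteq> b" using g e by (metis doubleton_eq_iff insert_absorb2)
      ultimately have "{a,b} = {u,v}" by auto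
      then show False using e uv(1) by simp
    qed
    then obtain c where c: "c \<in> set L'" "c \<notin> {u,v}" unfolding L'_def by auto
    have "hd L' = u" "last L' = v" using hdL unfolding d L'_def by (auto simp: hd_append last_append split: if_splits)
    moreover have "\<And>x. count_list L' x \<le> count_list L x" unfolding d L'_def by simp
    moreover have "path_edges L' \<subseteq> E"
    proof -
      have "path_edges L' = path_edges (p @ [a]) \<union> path_edges (b # r) \<union> {{a,b}}"
        unfolding L'_def using pe_append[of "p @ [a]" "b # r"] by auto
      moreover have "path_edges (p @ [a]) \<subseteq> path_edges L" unfolding d using pe_left[of "p @ [a]" "q @ [b] @ r"] by simp
      moreover have "path_edges (b # r) \<subseteq> path_edges L" unfolding d using pe_right[where X="p @ [a] @ q" and Y="b # r"] by simp
      ultimately show ?thesis using peL e by blast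
    qed
    ultimately have "length L \<le> length L'" using short[of L' c] c by blast
    then show ?thesis using False unfolding d L'_def by simp
  qed
  have chordless: "\<forall>a\<in>set L. \<forall>b\<in>set L. {a,b} \<in> E \<longrightarrow> {a,b} \<in> path_edges L"
  proof (intro ballI impI)
    fix a b assume a: "a \<in> set L" and b: "b \<in> set L" and e: "{a,b} \<in> E"
    have "a \<noteq> b" using g e by (metis doubleton_eq_iff insert_absorb2)
    obtain p rest where pr: "L = p @ a # rest" using a split_list by metis
    have "b \<in> set p \<or> b \<in> set rest" using b pr \<open>a \<noteq> b\<close> by auto
    then show "{a,b} \<in> path_edges L"
    proof
      assume "b \<in> set p"
      then obtain q1 q2 where "p = q1 @ b # q2" using split_list by metis
      then have "L = q1 @ [b] @ q2 @ [a] @ rest" using pr by simp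
      then have "{b,a} \<in> path_edges L" using chord e by (metis insert_commute)
      then show ?thesis by (simp add: insert_commute)
    next
      assume "b \<in> set rest"
      then obtain q1 q2 where "rest = q1 @ b # q2" using split_list by metis
      then have "L = p @ [a] @ q1 @ [b] @ q2" using pr by simp
      then show ?thesis using chord e by blast
    qed
  qed
  show ?thesis using msP dist chordless unfolding L_def by blast
qed




theorem mainTheorem4:
  fixes V :: "'a set" and E :: "'a set set" and u v :: 'a and C :: "'a set"
  assumes "isk4_wheel_free V E"
    and "\<not> has_1cutset V E"
    and "is_2cutset V E u v"
    and "C \<in> components (V - {u, v}) E"
  shows "isk4_wheel_free (cl_V C u v) (cl_E E C u v)
         \<or> isk4_wheel_free (clstar_V C u v) (clstar_E E C u v)"
proof -
  have g: "graph V E" and fI: "ISK4_free V E" and fW: "wheel_free V E"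
    using assms(1) unfolding isk4_wheel_free_def by auto
  have uv: "u \<in> V" "v \<in> V" "u \<noteq> v" and c2: "card (components (V - {u, v}) E) \<ge> 2"
    using assms(3) unfolding is_2cutset_def by auto
  have C: "C \<in> components (V - {u, v}) E" by fact
  define A where "A = C \<union> {u,v}"
  have CS: "C \<subseteq> V - {u,v}" using comp_sub[OF C] .
  have AV: "A \<subseteq> V" unfolding A_def using CS uv by blast
  have finV: "finite V" using g unfolding graph_def by simp
  have finA: "finite A" using finite_subset[OF AV finV] .
  have Eok: "\<forall>e\<in>E. \<exists>x y. e = {x, y} \<and> x \<noteq> y \<and> x \<in> V \<and> y \<in> V" using g unfolding graph_def by simp
  have IAsub: "\<forall>e\<in>induced E A. e \<subseteq> A" unfolding induced_def by blast
  have gA: "graph A (induced E A)" unfolding graph_def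
  proof (intro conjI ballI)
    fix e assume e: "e \<in> induced E A"
    then have "e \<in> E" "e \<subseteq> A" unfolding induced_def by auto
    moreover obtain x y where "e = {x,y}" "x \<noteq> y" using Eok \<open>e \<in> E\<close> by blast
    ultimately show "\<exists>x y. e = {x, y} \<and> x \<noteq> y \<and> x \<in> A \<and> y \<in> A" by blast
  qed (rule finA)
  show ?thesis
  proof (cases "{u,v} \<in> E")
    case True
    have "cl_E E C u v = induced E A" unfolding cl_E_def A_def using True unfolding induced_def by auto
    moreover have "cl_V C u v = A" unfolding cl_V_def A_def ..
    ultimately have "isk4_wheel_free (cl_V C u v) (cl_E E C u v)"
      unfolding isk4_wheel_free_def using gA induced_isk4[OF fI AV] induced_wheel[OF fW AV] by simp
    then show ?thesis ..
  next
    case False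
    have "\<exists>C'. C' \<in> components (V - {u, v}) E \<and> C' \<noteq> C"
    proof (rule ccontr)
      assume "\<not> ?thesis"
      then have "components (V - {u, v}) E \<subseteq> {C}" by blast
      then have "card (components (V - {u, v}) E) \<le> 1" using card_mono[of "{C}"] by fastforce
      then show False using c2 by simp
    qed
    then obtain C' where C': "C' \<in> components (V - {u, v}) E" "C' \<noteq> C" by blast
    have C'S: "C' \<subseteq> V - {u,v}" using comp_sub[OF C'(1)] .
    obtain a where a: "a \<in> C'" "{u,a} \<in> E" using nbr_exists[OF g assms(2) uv(1,2) C C'(1) C'(2)[symmetric]] by blast
    have C2: "C \<in> components (V - {v, u}) E" "C' \<in> components (V - {v, u}) E" using C C'(1) by (simp_all add: insert_commute)
    obtain b where b: "b \<in> C'" "{v,b} \<in> E" using nbr_exists[OF g assms(2) uv(2,1) C2 C'(2)[symmetric]] by blast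
    have aS: "a \<in> V - {u,v}" using a C'S by blast
    have C'a: "C' = {z \<in> V - {u,v}. (adj_in (V - {u,v}) E)\<^sup>*\<^sup>* a z}" by (rule comp_member[OF C'(1) a(1)])
    then have "(adj_in (V - {u,v}) E)\<^sup>*\<^sup>* a b" using b(1) by blast
    from walk_exists[OF this aS] obtain L where L: "L \<noteq> []" "hd L = a" "last L = b" "path_edges L \<subseteq> E" "set L \<subseteq> C'"
      unfolding C'a[symmetric] by blast
    have "path_edges (u # L @ [v]) = insert {last L, v} (insert {u, hd L} (path_edges L))"
      using pe_snoc[of "u # L" v] pe_Cons[OF L(1), of u] L(1) by simp
    then have "path_edges (u # L @ [v]) \<subseteq> E" using L a b by (auto simp: insert_commute)
    moreover have "u \<notin> C'" "v \<notin> C'" using C'S by auto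
    moreover have g2: "\<forall>e\<in>E. \<exists>x y. e = {x,y} \<and> x \<noteq> y" using Eok by blast
    ultimately obtain ms where ms: "ms \<noteq> []" "set ms \<subseteq> C'" "distinct (u # ms @ [v])" "path_edges (u # ms @ [v]) \<subseteq> E"
      "\<forall>a\<in>set (u # ms @ [v]). \<forall>b\<in>set (u # ms @ [v]). {a,b} \<in> E \<longrightarrow> {a,b} \<in> path_edges (u # ms @ [v])"
      using shortest_path[OF g2 False uv(3), of C' L] L by blast
    define Lp where "Lp = u # ms @ [v]"
    define W where "W = A \<union> set Lp"
    have setLp: "set Lp = {u,v} \<union> set ms" unfolding Lp_def by auto
    have WV: "W \<subseteq> V" unfolding W_def using AV setLp ms(2) C'S uv(1,2) by auto
    have msC: "\<And>x. x \<in> set ms \<Longrightarrow> x \<notin> A"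
    proof -
      fix x assume "x \<in> set ms"
      then have "x \<in> C'" using ms(2) by blast
      then show "x \<notin> A" unfolding A_def using comp_disj[OF C'(1) C C'(2)] C'S by blast
    qed
    have indW: "induced E W = induced E A \<union> path_edges Lp"
    proof (rule set_eqI, rule iffI)
      fix e assume e: "e \<in> induced E W"
      then have eE: "e \<in> E" "e \<subseteq> W" unfolding induced_def by auto
      then obtain x y where xy: "e = {x,y}" "x \<noteq> y" using Eok by blast
      show "e \<in> induced E A \<union> path_edges Lp"
      proof (cases "x \<in> A \<and> y \<in> A")
        case True then show ?thesis using eE xy unfolding induced_def by auto
      next
        case False
        have xyW: "x \<in> W" "y \<in> W" using eE xy by auto
        have nC: "x \<notin> C \<or> y \<notin> C"
        proof (rule ccontr)
          assume "\<not> (x \<notin> C \<or> y \<notin> C)"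
          then have "x \<in> C" "y \<in> C" by auto
          then show False using False unfolding A_def by auto
        qed
        have inLp: "x \<in> set Lp" "y \<in> set Lp"
        proof -
          have mm: "x \<in> set ms \<or> y \<in> set ms" using False xyW setLp unfolding W_def A_def by blast
          have "\<not> (x \<in> set ms \<and> y \<in> C)"
          proof
            assume "x \<in> set ms \<and> y \<in> C"
            then show False using comp_noedge[OF C'(1) C C'(2), of x y] ms(2) eE(1) xy(1) by blast
          qed
          moreover have "\<not> (y \<in> set ms \<and> x \<in> C)"
          proof
            assume "y \<in> set ms \<and> x \<in> C"
            then show False using comp_noedge[OF C'(1) C C'(2), of y x] ms(2) eE(1) xy(1) by (auto simp: insert_commute)
          qed
          ultimately show "x \<in> set Lp" "y \<in> set Lp" using mm xyW setLp unfolding W_def A_def by blast+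
        qed
        then show ?thesis using ms(5) eE(1) xy(1) unfolding Lp_def by blast
      qed
    next
      fix e assume "e \<in> induced E A \<union> path_edges Lp"
      then show "e \<in> induced E W"
      proof
        assume "e \<in> induced E A" then show ?thesis unfolding induced_def W_def by auto
      next
        assume e: "e \<in> path_edges Lp"
        then have "e \<in> E" using ms(4) unfolding Lp_def by blast
        moreover have "e \<subseteq> W" using pe_sub[OF e] unfolding W_def by blast
        ultimately show ?thesis unfolding induced_def by blast
      qed
    qed
    have fW0: "free2 W (induced E W)" unfolding free2_def using induced_isk4[OF fI WV] induced_wheel[OF fW WV] by simp
    define m where "m = hd ms"
    have uvA: "u \<in> A" "v \<in> A" unfolding A_def by auto
    have dA: "set ms \<inter> A = {}" using msC by blast
    have "free2 (A \<union> set (u # ms @ [v])) (induced E A \<union> path_edges (u # ms @ [v]))"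
      using fW0 unfolding indW unfolding W_def Lp_def .
    then have fr: "free2 (A \<union> {u, m, v}) (induced E A \<union> {{u, m}, {m, v}})"
      unfolding m_def by (rule chain[OF ms(1) ms(3) dA uvA IAsub])
    have mA: "m \<notin> A" unfolding m_def using msC ms(1) by simp
    define f where "f = (\<lambda>ov. case ov of None \<Rightarrow> m | Some x \<Rightarrow> x)"
    define Vs where "Vs = clstar_V C u v"
    define Es where "Es = clstar_E E C u v"
    have Vs: "Vs = Some ` A \<union> {None}" unfolding Vs_def clstar_V_def A_def ..
    have clE: "cl_E E C u v - {{u,v}} = induced E A" unfolding cl_E_def A_def using False unfolding induced_def by auto
    have Es: "Es = (\<lambda>e. Some ` e) ` induced E A \<union> {{Some u, None}, {None, Some v}}"
      unfolding Es_def clstar_E_def clE ..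
    have inj: "inj_on f Vs" unfolding Vs f_def inj_on_def using mA by auto
    have Esub: "\<forall>e\<in>Es. e \<subseteq> Vs" unfolding Es Vs using IAsub uvA by auto
    have fS: "\<And>e. f ` (Some ` e) = e" unfolding f_def by (simp add: image_image)
    have "f None = m" unfolding f_def by simp
    then have fV: "f ` Vs = A \<union> {u, m, v}" unfolding Vs image_Un fS using uvA by auto
    have fE: "(\<lambda>e. f ` e) ` Es = induced E A \<union> {{u, m}, {m, v}}"
    proof -
      have "(\<lambda>e. f ` e) ` ((\<lambda>e. Some ` e) ` induced E A) = induced E A"
        using fS by (simp add: image_image)
      moreover have "f ` {Some u, None} = {u, m}" "f ` {None, Some v} = {m, v}" unfolding f_def by auto
      ultimately show ?thesis unfolding Es by (simp add: image_Un)
    qed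
    have i1: "ISK4_free Vs Es" using iso_isk4[OF inj Esub] fr unfolding free2_def fV fE by simp
    have i2: "wheel_free Vs Es" using iso_wheel[OF inj Esub] fr unfolding free2_def fV fE by simp
    have gs: "graph Vs Es"
    proof -
      have "finite Vs" unfolding Vs using finA by simp
      moreover have "\<forall>e\<in>Es. \<exists>x y. e = {x, y} \<and> x \<noteq> y \<and> x \<in> Vs \<and> y \<in> Vs"
      proof
        fix e assume "e \<in> Es"
        then consider (old) e0 where "e0 \<in> induced E A" "e = Some ` e0" | (n1) "e = {Some u, None}" | (n2) "e = {None, Some v}"
          unfolding Es by blast
        then show "\<exists>x y. e = {x, y} \<and> x \<noteq> y \<and> x \<in> Vs \<and> y \<in> Vs"
        proof cases
          case old
          then have "e0 \<in> E" unfolding induced_def by simp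
          then have "\<exists>x y. e0 = {x, y} \<and> x \<noteq> y \<and> x \<in> V \<and> y \<in> V" using Eok by (rule bspec[rotated])
          then obtain x y where "e0 = {x,y}" "x \<noteq> y" by blast
          moreover have "e0 \<subseteq> A" using old IAsub by blast
          ultimately show ?thesis using old unfolding Vs by (intro exI[of _ "Some x"] exI[of _ "Some y"]) auto
        next
          case n1 then show ?thesis unfolding Vs using uvA by auto
        next
          case n2 then show ?thesis unfolding Vs using uvA by auto
        qed
      qed
      ultimately show ?thesis unfolding graph_def by blast
    qed
    have "isk4_wheel_free (clstar_V C u v) (clstar_E E C u v)"
      using gs i1 i2 unfolding isk4_wheel_free_def Vs_def Es_def by simp
    then show ?thesis ..
  qed
qed


end
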